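(* Every Halin graph is $(3,1)$-choosable.
   Context: A Halin graph is a planar graph constructed from a planar drawing of a tree with at least four vertices and no vertices of degree two by connecting its leaves by a cycle that crosses none of its edges. A $(k,d)$-list assignment for a graph $G$ assigns to each vertex $v$ a list $L(v)$ of at least $k$ colors such that $|L(x)\cap L(y)|\le d$ whenever $x$ and $y$ are adjacent; $G$ is $(k,d)$-choosable if for every $(k,d)$-list assignment $L$ there is a proper vertex coloring $\varphi$ with $\varphi(v)\in L(v)$ for all $v$. *)

theory Defs
  imports Main
begin

definition simple_graph :: "'a set \<Rightarrow> 'a set set \<Rightarrow> bool" where
  "simple_graph V E \<longleftrightarrow> finite V \<and>
     (\<forall>e\<in>E. \<exists>u v. u \<noteq> v \<and> e = {u, v} \<and> u \<in> V \<and> v \<in> V)"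

definition adjacent :: "'a set set \<Rightarrow> 'a \<Rightarrow> 'a \<Rightarrow> bool" where
  "adjacent E x y \<longleftrightarrow> {x, y} \<in> E"

definition degree :: "'a set set \<Rightarrow> 'a \<Rightarrow> nat" where
  "degree E v = card {e \<in> E. v \<in> e}"

definition reach :: "'a set set \<Rightarrow> 'a \<Rightarrow> 'a \<Rightarrow> bool" where
  "reach E = (adjacent E)\<^sup>*\<^sup>*"

definition is_tree :: "'a set \<Rightarrow> 'a set set \<Rightarrow> bool" where
  "is_tree V T \<longleftrightarrow> simple_graph V T \<and> V \<noteq> {} \<and>
     (\<forall>u\<in>V. \<forall>v\<in>V. reach T u v) \<and>
     (\<forall>e\<in>T. \<forall>u v. e = {u, v} \<longrightarrow> \<not> reach (T - {e}) u v)"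

definition leaves :: "'a set \<Rightarrow> 'a set set \<Rightarrow> 'a set" where
  "leaves V T = {v \<in> V. degree T v = 1}"

text \<open>That the cycle can be drawn without crossing a planar drawing of the tree is
expressed combinatorially: for every tree edge {u,v}, the leaves on u's side of
T - {u,v} form a contiguous arc of the cyclic leaf order.\<close>
definition halin_graph :: "'a set \<Rightarrow> 'a set set \<Rightarrow> bool" where
  "halin_graph V E \<longleftrightarrow>
     (\<exists>T c k. is_tree V T \<and> card V \<ge> 4 \<and> (\<forall>v\<in>V. degree T v \<noteq> 2) \<and>
        k = card (leaves V T) \<and> k \<ge> 3 \<and>
        bij_betw c {..<k} (leaves V T) \<and>
        E = T \<union> {{c i, c (Suc i mod k)} | i. i < k} \<and>
        (\<forall>e\<in>T. \<forall>u v. e = {u, v} \<longrightarrow>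
           (\<exists>a l. {x \<in> leaves V T. reach (T - {e}) u x} =
                  (\<lambda>j. c ((a + j) mod k)) ` {..<l})))"

definition kd_list_assignment ::
  "nat \<Rightarrow> nat \<Rightarrow> 'a set \<Rightarrow> 'a set set \<Rightarrow> ('a \<Rightarrow> 'c set) \<Rightarrow> bool" where
  "kd_list_assignment k d V E L \<longleftrightarrow>
     (\<forall>v\<in>V. finite (L v) \<and> card (L v) \<ge> k) \<and>
     (\<forall>x\<in>V. \<forall>y\<in>V. adjacent E x y \<longrightarrow> card (L x \<inter> L y) \<le> d)"

definition proper_L_coloring ::
  "'a set \<Rightarrow> 'a set set \<Rightarrow> ('a \<Rightarrow> 'c set) \<Rightarrow> ('a \<Rightarrow> 'c) \<Rightarrow> bool" where
  "proper_L_coloring V E L \<phi> \<longleftrightarrow>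
     (\<forall>v\<in>V. \<phi> v \<in> L v) \<and> (\<forall>x\<in>V. \<forall>y\<in>V. adjacent E x y \<longrightarrow> \<phi> x \<noteq> \<phi> y)"

definition kd_choosable ::
  "nat \<Rightarrow> nat \<Rightarrow> 'a set \<Rightarrow> 'a set set \<Rightarrow> 'c itself \<Rightarrow> bool" where
  "kd_choosable k d V E (_ :: 'c itself) \<longleftrightarrow>
     (\<forall>L :: 'a \<Rightarrow> 'c set. kd_list_assignment k d V E L \<longrightarrow>
        (\<exists>\<phi>. proper_L_coloring V E L \<phi>))"

end

theory Submission
  imports Defs
begin


lemma adj_sym: "adjacent E x y \<Longrightarrow> adjacent E y x"
  by (simp add: adjacent_def insert_commute)

lemma no_loop: "simple_graph V T \<Longrightarrow> \<not> adjacent T x x"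
  unfolding simple_graph_def adjacent_def by fastforce

lemma path_reach:
  assumes "\<forall>i. Suc i < n \<longrightarrow> adjacent F (xs!i) (xs!Suc i)" "i < n"
  shows "reach F (xs!0) (xs!i)"
  using assms(2)
proof (induction i)
  case 0
  show ?case by (simp add: reach_def)
next
  case (Suc i)
  then have "reach F (xs!0) (xs!i)" by simp
  moreover have "adjacent F (xs!i) (xs!Suc i)" using assms(1) Suc.prems by blast
  ultimately show ?case unfolding reach_def by (rule rtranclp.rtrancl_into_rtrancl)
qed

lemma forest_degen:
  assumes sg: "simple_graph V T"
    and br: "\<forall>e\<in>T. \<forall>u v. e = {u,v} \<longrightarrow> \<not> reach (T-{e}) u v"
    and SV: "S \<subseteq> V" and Sne: "S \<noteq> {}"
  shows "\<exists>w\<in>S. \<forall>y\<in>S. \<forall>z\<in>S. adjacent T w y \<longrightarrow> adjacent T w z \<longrightarrow> y = z"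
proof -
  define P where "P = {xs. distinct xs \<and> set xs \<subseteq> S \<and> xs \<noteq> [] \<and>
      (\<forall>i. Suc i < length xs \<longrightarrow> adjacent T (xs!i) (xs!Suc i))}"
  have finS: "finite S" using sg SV finite_subset simple_graph_def by blast
  have "P \<subseteq> {xs. set xs \<subseteq> S \<and> length xs \<le> card S}"
  proof
    fix xs assume "xs \<in> P"
    then have "distinct xs" "set xs \<subseteq> S" by (auto simp: P_def)
    have "length xs = card (set xs)" using distinct_card[OF \<open>distinct xs\<close>] by simp
    moreover have "card (set xs) \<le> card S" using card_mono[OF finS \<open>set xs \<subseteq> S\<close>] .
    ultimately show "xs \<in> {xs. set xs \<subseteq> S \<and> length xs \<le> card S}"
      using \<open>set xs \<subseteq> S\<close> by simp
  qed
  hence finP: "finite P" using finite_lists_length_le[OF finS] finite_subset by blast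
  obtain s where "s\<in>S" using Sne by blast
  hence "[s] \<in> P" by (simp add: P_def)
  define m where "m = Max (length ` P)"
  have "m \<in> length ` P" unfolding m_def using finP \<open>[s] \<in> P\<close> by (intro Max_in) auto
  then obtain xs where xsP: "xs \<in> P" and xsm: "length xs = m" by blast
  have maxm: "\<forall>ys\<in>P. length ys \<le> m"
  proof
    fix ys assume "ys \<in> P"
    then show "length ys \<le> m" unfolding m_def using finP by (intro Max_ge) auto
  qed
  have dxs: "distinct xs" and sxs: "set xs \<subseteq> S" and nexs: "xs \<noteq> []"
    and pxs: "\<forall>i. Suc i < length xs \<longrightarrow> adjacent T (xs!i) (xs!Suc i)"
    using xsP by (auto simp: P_def)
  define w where "w = xs!0"
  have key: "Suc 0 < length xs \<and> y = xs!1" if y: "y\<in>S" "adjacent T w y" for y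
  proof -
    have yw: "y \<noteq> w" using y(2) no_loop[OF sg] by blast
    show ?thesis
    proof (cases "y \<in> set xs")
      case False
      have "y # xs \<in> P" unfolding P_def
      proof (intro CollectI conjI allI impI)
        show "distinct (y # xs)" using False dxs by simp
        show "set (y # xs) \<subseteq> S" using sxs y by simp
        show "y # xs \<noteq> []" by simp
        fix i assume i: "Suc i < length (y # xs)"
        show "adjacent T ((y # xs) ! i) ((y # xs) ! Suc i)"
        proof (cases i)
          case 0
          then show ?thesis using adj_sym[OF y(2)] w_def by simp
        next
          case (Suc i')
          then show ?thesis using pxs i by simp
        qed
      qed
      then have "length (y # xs) \<le> m" using maxm by blast
      then show ?thesis using xsm by simp
    next
      case True
      then obtain j where j: "j < length xs" "xs!j = y" by (metis in_set_conv_nth)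
      have j0: "j \<noteq> 0"
      proof
        assume "j = 0" then show False using yw w_def j by simp
      qed
      show ?thesis
      proof (cases "j = 1")
        case True then show ?thesis using j by simp
      next
        case False
        hence j2: "2 \<le> j" using j0 by simp
        have eT: "{w, y} \<in> T" using y(2) adjacent_def by metis
        have "reach (T - {{w,y}}) (xs!0) (xs!j)"
        proof (rule path_reach[where n = "Suc j"])
          show "j < Suc j" by simp
          show "\<forall>i. Suc i < Suc j \<longrightarrow> adjacent (T - {{w, y}}) (xs ! i) (xs ! Suc i)"
          proof (intro allI impI)
            fix i assume i: "Suc i < Suc j"
            have a: "adjacent T (xs!i) (xs!Suc i)" using pxs i j by simp
            have "{xs!i, xs!Suc i} \<noteq> {xs!0, xs!j}"
            proof
              assume eq: "{xs!i, xs!Suc i} = {xs!0, xs!j}"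
              have "xs!Suc i \<in> {xs!0, xs!j}" using eq by blast
              moreover have si: "Suc i < length xs" using i j by simp
              moreover have l0: "0 < length xs" using j(1) by linarith
              ultimately have "Suc i = 0 \<or> Suc i = j"
                using nth_eq_iff_index_eq[OF dxs si l0] nth_eq_iff_index_eq[OF dxs si j(1)] by blast
              hence sij: "Suc i = j" by simp
              have "xs!i \<in> {xs!0, xs!j}" using eq by blast
              moreover have ii: "i < length xs" using i j by simp
              moreover have l0: "0 < length xs" using j(1) by linarith
              ultimately have "i = 0 \<or> i = j"
                using nth_eq_iff_index_eq[OF dxs ii l0] nth_eq_iff_index_eq[OF dxs ii j(1)] by blast
              then show False using sij j2 by auto
            qed
            then show "adjacent (T - {{w, y}}) (xs ! i) (xs ! Suc i)"
              using a j w_def unfolding adjacent_def by auto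
          qed
        qed
        hence "reach (T - {{w,y}}) w y" using w_def j by simp
        then show ?thesis using br eT by blast
      qed
    qed
  qed
  have "w \<in> S" using w_def sxs nexs by (simp add: subset_code(1))
  then show ?thesis using key by (metis (no_types))
qed

lemma greedy:
  fixes A :: "'a \<Rightarrow> 'a \<Rightarrow> bool" and L :: "'a \<Rightarrow> 'c set"
  assumes "finite S"
  shows "(\<forall>S'\<subseteq>S. S'\<noteq>{} \<longrightarrow> (\<exists>w\<in>S'. \<forall>y\<in>S'. \<forall>z\<in>S'. A w y \<longrightarrow> A w z \<longrightarrow> y = z)) \<longrightarrow>
     (\<forall>v\<in>S. finite (L v) \<and> card (L v) \<ge> 2) \<longrightarrow> (\<forall>v. \<not> A v v) \<longrightarrow> (\<forall>x y. A x y \<longrightarrow> A y x) \<longrightarrow>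
     (\<exists>\<phi>. (\<forall>v\<in>S. \<phi> v \<in> L v) \<and> (\<forall>x\<in>S. \<forall>y\<in>S. A x y \<longrightarrow> \<phi> x \<noteq> \<phi> y))"
  using assms
proof (induction S rule: finite_psubset_induct)
  case (psubset S)
  show ?case
  proof (intro impI)
    assume dg: "\<forall>S'\<subseteq>S. S'\<noteq>{} \<longrightarrow> (\<exists>w\<in>S'. \<forall>y\<in>S'. \<forall>z\<in>S'. A w y \<longrightarrow> A w z \<longrightarrow> y = z)"
      and Ls: "\<forall>v\<in>S. finite (L v) \<and> card (L v) \<ge> 2" and irr: "\<forall>v. \<not> A v v"
      and sym: "\<forall>x y. A x y \<longrightarrow> A y x"
    show "\<exists>\<phi>. (\<forall>v\<in>S. \<phi> v \<in> L v) \<and> (\<forall>x\<in>S. \<forall>y\<in>S. A x y \<longrightarrow> \<phi> x \<noteq> \<phi> y)"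
    proof (cases "S = {}")
      case True then show ?thesis by simp
    next
      case False
      then obtain w where w: "w \<in> S" "\<forall>y\<in>S. \<forall>z\<in>S. A w y \<longrightarrow> A w z \<longrightarrow> y = z"
        using dg by blast
      have sub: "S - {w} \<subset> S" using w by blast
      have d2: "\<forall>S'\<subseteq>S - {w}. S'\<noteq>{} \<longrightarrow> (\<exists>w\<in>S'. \<forall>y\<in>S'. \<forall>z\<in>S'. A w y \<longrightarrow> A w z \<longrightarrow> y = z)"
        using dg by blast
      have l2: "\<forall>v\<in>S-{w}. finite (L v) \<and> card (L v) \<ge> 2" using Ls by blast
      have "\<exists>\<phi>. (\<forall>v\<in>S-{w}. \<phi> v \<in> L v) \<and> (\<forall>x\<in>S-{w}. \<forall>y\<in>S-{w}. A x y \<longrightarrow> \<phi> x \<noteq> \<phi> y)"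
        using psubset.IH[OF sub] d2 l2 irr sym by blast
      then obtain \<phi>0 where p0: "\<forall>v\<in>S-{w}. \<phi>0 v \<in> L v"
        "\<forall>x\<in>S-{w}. \<forall>y\<in>S-{w}. A x y \<longrightarrow> \<phi>0 x \<noteq> \<phi>0 y"
        by blast
      define N where "N = {y\<in>S-{w}. A w y}"
      have finN: "finite N" using psubset.hyps N_def by simp
      have "card N \<le> Suc 0" using card_le_Suc0_iff_eq[OF finN] w(2) N_def by blast
      hence cN: "card (\<phi>0 ` N) \<le> 1" using card_image_le[OF finN, of \<phi>0] by simp
      have "L w - \<phi>0 ` N \<noteq> {}"
      proof
        assume "L w - \<phi>0 ` N = {}"
        hence "L w \<subseteq> \<phi>0 ` N" by blast
        hence "card (L w) \<le> card (\<phi>0 ` N)" using finN card_mono by blast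
        then show False using cN Ls w(1) by force
      qed
      then obtain col where col: "col \<in> L w" "col \<notin> \<phi>0 ` N" by blast
      define \<phi> where "\<phi> = \<phi>0(w := col)"
      show ?thesis
      proof (intro exI conjI ballI impI)
        fix v assume "v \<in> S" then show "\<phi> v \<in> L v" using p0 col \<phi>_def by auto
      next
        fix x y assume xy: "x \<in> S" "y \<in> S" "A x y"
        show "\<phi> x \<noteq> \<phi> y"
        proof (cases "x = w")
          case True
          then have "y \<noteq> w" using irr xy by blast
          then have "y \<in> N" using N_def xy True by blast
          then show ?thesis using col \<phi>_def True \<open>y \<noteq> w\<close> by auto
        next
          case False
          show ?thesis
          proof (cases "y = w")
            case True
            then have "x \<in> N" using N_def xy False sym by blast
            then show ?thesis using col \<phi>_def True False by auto
          next
            case False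
            then show ?thesis using p0 xy \<open>x \<noteq> w\<close> \<phi>_def by auto
          qed
        qed
      qed
    qed
  qed
qed

primrec seqcol :: "(nat \<Rightarrow> 'c set) \<Rightarrow> 'c \<Rightarrow> nat \<Rightarrow> 'c" where
  "seqcol M a 0 = a"
| "seqcol M a (Suc j) = (SOME col. col \<in> M (Suc j) \<and> col \<noteq> seqcol M a j)"

lemma seqcol_prop:
  assumes "finite (M (Suc j))" "card (M (Suc j)) \<ge> 2"
  shows "seqcol M a (Suc j) \<in> M (Suc j) \<and> seqcol M a (Suc j) \<noteq> seqcol M a j"
proof -
  have "\<exists>col. col \<in> M (Suc j) \<and> col \<noteq> seqcol M a j"
  proof (rule ccontr)
    assume "\<not> (\<exists>col. col \<in> M (Suc j) \<and> col \<noteq> seqcol M a j)"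
    hence "M (Suc j) \<subseteq> {seqcol M a j}" by blast
    hence "card (M (Suc j)) \<le> card {seqcol M a j}" by (rule card_mono[rotated]) simp
    then show False using assms by simp
  qed
  then obtain col where "col \<in> M (Suc j) \<and> col \<noteq> seqcol M a j" by blast
  then show ?thesis
    using someI[of "\<lambda>col. col \<in> M (Suc j) \<and> col \<noteq> seqcol M a j" col] by simp
qed



theorem proposition2:
  fixes V :: "'a set" and E :: "'a set set"
  assumes "halin_graph V E"
  shows "kd_choosable 3 1 V E TYPE('c)"
proof -
  obtain T c k where tree: "is_tree V T" and card4: "card V \<ge> 4"
    and kdef: "k = card (leaves V T)" and k3: "k \<ge> 3"
    and bij: "bij_betw c {..<k} (leaves V T)"
    and Edef: "E = T \<union> {{c i, c (Suc i mod k)} | i. i < k}"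
    using assms unfolding halin_graph_def by blast
  define Lf where "Lf = leaves V T"
  define I where "I = V - Lf"
  have tr: "simple_graph V T \<and> V \<noteq> {} \<and>
     (\<forall>u\<in>V. \<forall>v\<in>V. reach T u v) \<and>
     (\<forall>e\<in>T. \<forall>u v. e = {u, v} \<longrightarrow> \<not> reach (T - {e}) u v)"
    using tree unfolding is_tree_def .
  have sg: "simple_graph V T" using tr by (rule conjunct1)
  have finV: "finite V" using sg unfolding simple_graph_def by (rule conjunct1)
  have conn: "\<forall>u\<in>V. \<forall>v\<in>V. reach T u v" using tr by (elim conjE)
  have br: "\<forall>e\<in>T. \<forall>u v. e = {u, v} \<longrightarrow> \<not> reach (T - {e}) u v" using tr by (elim conjE)
  have LfV: "Lf \<subseteq> V" by (auto simp: Lf_def leaves_def)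
  have cL: "\<forall>i<k. c i \<in> Lf" using bij Lf_def bij_betwE by fastforce
  have cinj: "inj_on c {..<k}" using bij bij_betw_def by blast
  have deg1: "\<forall>x\<in>Lf. card {e\<in>T. x\<in>e} = 1" by (auto simp: Lf_def leaves_def degree_def)
  have edge_uniq: "{a,x} = {b,x}" if "x \<in> Lf" "{a,x}\<in>T" "{b,x}\<in>T" for x a b
  proof -
    have "card {e\<in>T. x\<in>e} = 1" using deg1 that(1) by blast
    then obtain e0 where e0: "{e\<in>T. x\<in>e} = {e0}" by (rule card_1_singletonE)
    have "{a,x} \<in> {e\<in>T. x\<in>e}" "{b,x} \<in> {e\<in>T. x\<in>e}" using that by auto
    then show ?thesis unfolding e0 by simp
  qed
  have no_ll: "{x,y} \<notin> T" if xy: "x \<in> Lf" "y \<in> Lf" for x y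
  proof
    assume xyT: "{x,y} \<in> T"
    have "w \<in> {x,y}" if "reach T x w" for w
      using that unfolding reach_def
    proof (induction rule: rtranclp_induct)
      case base then show ?case by simp
    next
      case (step w z)
      have wz: "{z,w} \<in> T" using step(2) by (simp add: adjacent_def insert_commute)
      show ?case
      proof (cases "w = x")
        case True
        have "{y,x} \<in> T" using xyT by (simp add: insert_commute)
        moreover have "{z,x} \<in> T" using wz True by simp
        ultimately have "{z,x} = {y,x}" using edge_uniq[OF xy(1)] by blast
        then show ?thesis by blast
      next
        case False
        then have "w = y" using step(3) by simp
        then have "{z,y} \<in> T" using wz by simp
        then have "{z,y} = {x,y}" using edge_uniq[OF xy(2)] xyT by blast
        then show ?thesis by blast
      qed
    qed
    note reachlem = this
    have VS: "V \<subseteq> {x,y}"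
    proof
      fix w assume "w \<in> V"
      moreover have "x \<in> V" using xy(1) LfV by blast
      ultimately have "reach T x w" using conn by blast
      then show "w \<in> {x,y}" by (rule reachlem)
    qed
    have "card V \<le> card {x,y}" by (rule card_mono[OF _ VS]) simp
    also have "\<dots> \<le> 2" by (cases "x = y") auto
    finally show False using card4 by simp
  qed
  have cycLf: "a \<in> Lf \<and> b \<in> Lf" if ab: "{a,b} \<in> {{c i, c (Suc i mod k)} | i. i < k}" for a b
  proof -
    obtain i where i: "i < k" "{a,b} = {c i, c (Suc i mod k)}" using ab by blast
    have "Suc i mod k < k" using k3 by simp
    then have "c i \<in> Lf" "c (Suc i mod k) \<in> Lf" using i(1) cL by blast+
    moreover have "a \<in> {c i, c (Suc i mod k)}" "b \<in> {c i, c (Suc i mod k)}"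
      using i(2) by blast+
    ultimately show ?thesis by blast
  qed
  have ll_adj: "\<exists>i<k. {x,y} = {c i, c (Suc i mod k)}"
    if xyL: "x \<in> Lf" "y \<in> Lf" "adjacent E x y" for x y
  proof -
    have "{x,y} \<in> E" using xyL(3) unfolding adjacent_def .
    moreover have "{x,y} \<notin> T" using no_ll xyL(1,2) by blast
    ultimately have "{x,y} \<in> {{c i, c (Suc i mod k)} | i. i < k}" using Edef by blast
    then show ?thesis by blast
  qed
  have IT: "adjacent T u v" if uv: "u \<in> I" "adjacent E u v" for u v
  proof -
    have uE: "{u,v} \<in> E" using uv(2) unfolding adjacent_def .
    have uL: "u \<notin> Lf" using uv(1) I_def by blast
    have "{u,v} \<notin> {{c i, c (Suc i mod k)} | i. i < k}"
    proof
      assume "{u,v} \<in> {{c i, c (Suc i mod k)} | i. i < k}"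
      then have "u \<in> Lf" using cycLf by blast
      then show False using uL by blast
    qed
    then have "{u,v} \<in> T" using uE Edef by blast
    then show ?thesis unfolding adjacent_def .
  qed
  have nb1: "u = u'" if hyp: "x \<in> Lf" "u \<in> I" "u' \<in> I" "adjacent E u x" "adjacent E u' x" for x u u'
  proof -
    have "adjacent T u x" "adjacent T u' x" using IT hyp by blast+
    then have "{u,x} \<in> T" "{u',x} \<in> T" unfolding adjacent_def by blast+
    then have e: "{u,x} = {u',x}" using edge_uniq hyp(1) by blast
    have "u \<noteq> x" using hyp I_def by blast
    moreover have "u \<in> {u',x}" using e by blast
    ultimately show ?thesis by blast
  qed
  show ?thesis unfolding kd_choosable_def
  proof (intro allI impI)
    fix L :: "'a \<Rightarrow> 'c set"
    assume LA: "kd_list_assignment 3 1 V E L"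
    have Lc: "\<forall>v\<in>V. finite (L v) \<and> 3 \<le> card (L v)"
      using LA unfolding kd_list_assignment_def by (rule conjunct1)
    have Li: "\<forall>x\<in>V. \<forall>y\<in>V. adjacent E x y \<longrightarrow> card (L x \<inter> L y) \<le> 1"
      using LA unfolding kd_list_assignment_def by (rule conjunct2)
    have finI: "finite I" using finV I_def by simp
    have "\<exists>\<phi>. (\<forall>v\<in>I. \<phi> v \<in> L v) \<and> (\<forall>x\<in>I. \<forall>y\<in>I. adjacent T x y \<longrightarrow> \<phi> x \<noteq> \<phi> y)"
    proof -
      have d: "\<forall>S'\<subseteq>I. S'\<noteq>{} \<longrightarrow> (\<exists>w\<in>S'. \<forall>y\<in>S'. \<forall>z\<in>S'. adjacent T w y \<longrightarrow> adjacent T w z \<longrightarrow> y = z)"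
      proof (intro allI impI)
        fix S' assume s1: "S' \<subseteq> I" and s2: "S' \<noteq> {}"
        have IV: "I \<subseteq> V" unfolding I_def by (rule Diff_subset)
        have s3: "S' \<subseteq> V" by (rule subset_trans[OF s1 IV])
        show "\<exists>w\<in>S'. \<forall>y\<in>S'. \<forall>z\<in>S'. adjacent T w y \<longrightarrow> adjacent T w z \<longrightarrow> y = z"
          by (rule forest_degen[OF sg br s3 s2])
      qed
      have l: "\<forall>v\<in>I. finite (L v) \<and> card (L v) \<ge> 2"
      proof
        fix v assume "v \<in> I"
        then have "v \<in> V" using I_def by blast
        then have "finite (L v) \<and> 3 \<le> card (L v)" using Lc by blast
        then show "finite (L v) \<and> card (L v) \<ge> 2" by simp
      qed
      have i: "\<forall>v. \<not> adjacent T v v" using no_loop[OF sg] by blast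
      have sy: "\<forall>x y. adjacent T x y \<longrightarrow> adjacent T y x" by (blast intro: adj_sym)
      show ?thesis using mp[OF mp[OF mp[OF mp[OF greedy[OF finI, of "adjacent T" L] d] l] i] sy] .
    qed
    then obtain \<phi>1 where p1: "\<forall>v\<in>I. \<phi>1 v \<in> L v"
      "\<forall>x\<in>I. \<forall>y\<in>I. adjacent T x y \<longrightarrow> \<phi>1 x \<noteq> \<phi>1 y" by blast
    define Lp where "Lp x = L x - \<phi>1 ` {u\<in>I. adjacent E u x}" for x
    have Lp_card: "finite (Lp x) \<and> 2 \<le> card (Lp x)" if x: "x \<in> Lf" for x
    proof -
      define N where "N = {u\<in>I. adjacent E u x}"
      have finN: "finite N" using finI N_def by simp
      have "card N \<le> Suc 0" using card_le_Suc0_iff_eq[OF finN] nb1[OF x] N_def by blast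
      hence cN: "card (\<phi>1 ` N) \<le> 1" using card_image_le[OF finN, of \<phi>1] by simp
      have "card (L x) - card (\<phi>1 ` N) \<le> card (Lp x)"
        using diff_card_le_card_Diff[of "\<phi>1 ` N" "L x"] finN Lp_def N_def by simp
      moreover have "3 \<le> card (L x)" "finite (L x)" using Lc x LfV by auto
      ultimately show ?thesis using cN Lp_def by simp
    qed
    have Lp_int: "card (Lp x \<inter> Lp y) \<le> 1" if "x \<in> Lf" "y \<in> Lf" "adjacent E x y" for x y
    proof -
      have "Lp x \<inter> Lp y \<subseteq> L x \<inter> L y" using Lp_def by auto
      moreover have "finite (L x \<inter> L y)" using Lc that LfV by auto
      ultimately have "card (Lp x \<inter> Lp y) \<le> card (L x \<inter> L y)" using card_mono by blast
      also have "\<dots> \<le> 1" using Li that LfV by blast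
      finally show ?thesis .
    qed
    have s1: "Suc 0 mod k = 1" using k3 by simp
    have c01: "adjacent E (c 0) (c 1)"
    proof -
      have "{c 0, c (Suc 0 mod k)} \<in> E" using Edef k3 by auto
      then have "{c 0, c 1} \<in> E" using s1 by simp
      then show ?thesis unfolding adjacent_def .
    qed
    have c0L: "c 0 \<in> Lf" and c1L: "c 1 \<in> Lf" using cL k3 by auto
    obtain a where a: "a \<in> Lp (c 0)" "a \<notin> Lp (c 1)"
    proof -
      have "\<not> Lp (c 0) \<subseteq> Lp (c 1)"
      proof
        assume "Lp (c 0) \<subseteq> Lp (c 1)"
        hence "Lp (c 0) \<inter> Lp (c 1) = Lp (c 0)" by blast
        then show False using Lp_int[OF c0L c1L c01] Lp_card[OF c0L] by simp
      qed
      then show ?thesis using that by blast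
    qed
    define M where "M j = Lp (c ((k - j) mod k))" for j
    define h where "h = seqcol M a"
    have h_prop: "h (Suc j) \<in> M (Suc j) \<and> h (Suc j) \<noteq> h j" if "Suc j < k" for j
    proof -
      have "(k - Suc j) mod k < k" using k3 by simp
      then have "c ((k - Suc j) mod k) \<in> Lf" using cL by blast
      then show ?thesis using seqcol_prop[of M j a] Lp_card M_def h_def by simp
    qed
    define \<psi> where "\<psi> i = h ((k - i) mod k)" for i
    have psiL: "\<psi> i \<in> Lp (c i)" if "i < k" for i
    proof (cases "i = 0")
      case True
      then show ?thesis using a \<psi>_def h_def by simp
    next
      case False
      then have e: "(k - i) mod k = Suc (k - Suc i)" using that by simp
      have "Suc (k - Suc i) < k" using False that by simp
      then have "h (Suc (k - Suc i)) \<in> M (Suc (k - Suc i))" using h_prop by blast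
      moreover have "M (Suc (k - Suc i)) = Lp (c i)" using M_def that False
        by (simp add: Suc_diff_Suc)
      ultimately show ?thesis using \<psi>_def e by simp
    qed
    have psi_cyc: "\<psi> i \<noteq> \<psi> (Suc i mod k)" if ik: "i < k" for i
    proof -
      consider "i = 0" | "i = k - 1" | "0 < i" "i < k - 1" using ik k3 by linarith
      then show ?thesis
      proof cases
        case 1
        then have "\<psi> (Suc i mod k) \<in> Lp (c 1)" using psiL s1 k3 by simp
        moreover have "\<psi> i = a" using 1 \<psi>_def h_def by simp
        ultimately show ?thesis using a by auto
      next
        case 2
        then have "Suc i mod k = 0" using k3 by simp
        moreover have "(k - i) mod k = Suc 0" using 2 k3 by simp
        ultimately show ?thesis using h_prop[of 0] k3 \<psi>_def by simp
      next
        case 3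
        then have "Suc i mod k = Suc i" by simp
        moreover have "(k - i) mod k = Suc (k - Suc i)" "(k - Suc i) mod k = k - Suc i"
          using 3 by auto
        moreover have "Suc (k - Suc i) < k" using 3 by simp
        ultimately show ?thesis using h_prop[of "k - Suc i"] \<psi>_def by simp
      qed
    qed
    define idx where "idx x = inv_into {..<k} c x" for x
    have idxL: "idx x < k \<and> c (idx x) = x" if "x \<in> Lf" for x
      using that bij Lf_def idx_def
      by (metis bij_betw_imp_surj_on inv_into_into f_inv_into_f lessThan_iff)
    have idxc: "idx (c i) = i" if "i < k" for i
      using that cinj idx_def by (simp add: inv_into_f_f)
    define \<phi> where "\<phi> x = (if x \<in> Lf then \<psi> (idx x) else \<phi>1 x)" for x
    have phiLf: "\<phi> x \<in> Lp x" if "x \<in> Lf" for x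
      using that psiL idxL \<phi>_def by metis
    have phic: "\<phi> (c i) = \<psi> i" if "i < k" for i
      using that cL idxc \<phi>_def by simp
    show "\<exists>\<phi>. proper_L_coloring V E L \<phi>"
      unfolding proper_L_coloring_def
    proof (intro exI conjI ballI impI)
      fix v assume v: "v \<in> V"
      show "\<phi> v \<in> L v"
      proof (cases "v \<in> Lf")
        case True then show ?thesis using phiLf Lp_def by blast
      next
        case False then show ?thesis using p1 v I_def \<phi>_def by simp
      qed
    next
      fix x y assume x: "x \<in> V" and y: "y \<in> V" and xy: "adjacent E x y"
      show "\<phi> x \<noteq> \<phi> y"
      proof (cases "x \<in> Lf")
        case xL: True
        show ?thesis
        proof (cases "y \<in> Lf")
          case yL: True
          obtain i where i: "i < k" "{x,y} = {c i, c (Suc i mod k)}" using ll_adj[OF xL yL xy] by blast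
          have "Suc i mod k < k" using k3 by simp
          then have "\<phi> (c i) \<noteq> \<phi> (c (Suc i mod k))" using phic i psi_cyc by simp
          then show ?thesis using i(2) by (auto simp: doubleton_eq_iff)
        next
          case yL: False
          then have "y \<in> I" using y I_def by blast
          moreover have "adjacent E y x" using adj_sym[OF xy] .
          ultimately have "\<phi>1 y \<notin> Lp x" using Lp_def by blast
          then show ?thesis using phiLf[OF xL] yL \<phi>_def by auto
        qed
      next
        case xL: False
        then have xI: "x \<in> I" using x I_def by blast
        show ?thesis
        proof (cases "y \<in> Lf")
          case yL: True
          have "\<phi>1 x \<notin> Lp y" using xI xy Lp_def by blast
          then show ?thesis using phiLf[OF yL] xL \<phi>_def by auto
        next
          case yL: False
          then have "y \<in> I" using y I_def by blast
          then show ?thesis using p1 xI IT[OF xI xy] xL yL \<phi>_def by simp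
        qed
      qed
    qed
  qed
qed

end
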